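(* Let $n,s,t$ be integers with $n/2>s>t\ge 2$, and suppose that $(t-1)\,f(n/2,s,t)\ge s$. Then there is no graph on $n$ vertices in which every induced subgraph on $s$ vertices contains both a clique of size $t$ and an independent set of size $t$.
   Context: For integers $N>s>t$, $f(N,s,t)$ denotes the largest integer $f$ such that every graph on $N$ vertices in which every induced subgraph on $s$ vertices has an independent set of size at least $t$ must contain an independent set of size at least $f$. (Floors are ignored, so $n/2$ is treated as an integer.) *)

theory Defs
  imports Main
begin

definition simple_graph :: "('a \<Rightarrow> 'a \<Rightarrow> bool) \<Rightarrow> bool" where
  "simple_graph E \<longleftrightarrow> (\<forall>x y. E x y \<longrightarrow> E y x) \<and> (\<forall>x. \<not> E x x)"

definition indep_set :: "('a \<Rightarrow> 'a \<Rightarrow> bool) \<Rightarrow> 'a set \<Rightarrow> bool" where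
  "indep_set E S \<longleftrightarrow> (\<forall>x\<in>S. \<forall>y\<in>S. x \<noteq> y \<longrightarrow> \<not> E x y)"

definition clique_set :: "('a \<Rightarrow> 'a \<Rightarrow> bool) \<Rightarrow> 'a set \<Rightarrow> bool" where
  "clique_set E S \<longleftrightarrow> (\<forall>x\<in>S. \<forall>y\<in>S. x \<noteq> y \<longrightarrow> E x y)"

definition has_indep :: "'a set \<Rightarrow> ('a \<Rightarrow> 'a \<Rightarrow> bool) \<Rightarrow> nat \<Rightarrow> bool" where
  "has_indep U E k \<longleftrightarrow> (\<exists>S\<subseteq>U. card S \<ge> k \<and> indep_set E S)"

definition has_clique :: "'a set \<Rightarrow> ('a \<Rightarrow> 'a \<Rightarrow> bool) \<Rightarrow> nat \<Rightarrow> bool" where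
  "has_clique U E k \<longleftrightarrow> (\<exists>S\<subseteq>U. card S \<ge> k \<and> clique_set E S)"

definition f_ind :: "nat \<Rightarrow> nat \<Rightarrow> nat \<Rightarrow> nat" where
  "f_ind N s t = (GREATEST f. \<forall>(V::nat set) E. finite V \<and> card V = N \<and> simple_graph E \<and>
       (\<forall>U\<subseteq>V. card U = s \<longrightarrow> has_indep U E t) \<longrightarrow> has_indep V E f)"

end

theory Submission
  imports Defs
begin

lemma f_prop:
  assumes "t \<le> s"
  shows "\<forall>(V::nat set) E. finite V \<and> card V = N \<and> simple_graph E \<and>
       (\<forall>U\<subseteq>V. card U = s \<longrightarrow> has_indep U E t) \<longrightarrow> has_indep V E (f_ind N s t)"
proof -
  let ?P = "\<lambda>f. \<forall>(V::nat set) E. finite V \<and> card V = N \<and> simple_graph E \<and>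
       (\<forall>U\<subseteq>V. card U = s \<longrightarrow> has_indep U E t) \<longrightarrow> has_indep V E f"
  have h0: "has_indep V E 0" for V :: "nat set" and E
    unfolding has_indep_def indep_set_def by (rule exI[of _ "{}"]) simp
  have P0: "?P 0" using h0 by blast
  have bound: "y \<le> N" if "?P y" for y
  proof -
    define E0 where "E0 = (\<lambda>(x::nat) (y::nat). False)"
    have sg: "simple_graph E0" unfolding simple_graph_def E0_def by auto
    have h: "\<forall>U\<subseteq>{0..<N}. card U = s \<longrightarrow> has_indep U E0 t"
      using assms unfolding has_indep_def indep_set_def E0_def by auto
    have "has_indep {0..<N} E0 y" using that sg h by auto
    then obtain S where "S \<subseteq> {0..<N}" "card S \<ge> y" unfolding has_indep_def by auto
    moreover have "card S \<le> N" using card_mono[OF _ \<open>S \<subseteq> {0..<N}\<close>] by simp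
    ultimately show ?thesis by simp
  qed
  have "?P (GREATEST f. ?P f)"
    by (rule GreatestI_ex_nat[where b=N]) (use P0 bound in auto)
  then show ?thesis unfolding f_ind_def by simp
qed

theorem mainTheorem6:
  fixes n s t :: nat
  assumes "n div 2 > s" and "s > t" and "t \<ge> 2"
    and "(t - 1) * f_ind (n div 2) s t \<ge> s"
  shows "\<not> (\<exists>(V::nat set) E. finite V \<and> card V = n \<and> simple_graph E \<and>
            (\<forall>U\<subseteq>V. card U = s \<longrightarrow> has_clique U E t \<and> has_indep U E t))"
proof
  assume "\<exists>(V::nat set) E. finite V \<and> card V = n \<and> simple_graph E \<and>
            (\<forall>U\<subseteq>V. card U = s \<longrightarrow> has_clique U E t \<and> has_indep U E t)"
  then obtain V :: "nat set" and E where V: "finite V" "card V = n" and sg: "simple_graph E"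
    and hyp: "\<forall>U\<subseteq>V. card U = s \<longrightarrow> has_clique U E t \<and> has_indep U E t" by blast
  define N where "N = n div 2"
  define f where "f = f_ind N s t"
  have fp: "\<forall>(V::nat set) E. finite V \<and> card V = N \<and> simple_graph E \<and>
       (\<forall>U\<subseteq>V. card U = s \<longrightarrow> has_indep U E t) \<longrightarrow> has_indep V E f"
    using f_prop[of t s N] assms(2) unfolding f_def by simp
  have step: "\<exists>S\<subseteq>W. card S \<ge> f \<and> indep_set E S" if WV: "W \<subseteq> V" and WN: "card W \<ge> N" for W
  proof -
    obtain W' where W': "W' \<subseteq> W" "card W' = N"
      using obtain_subset_with_card_n[OF WN] by blast
    have WV': "W' \<subseteq> V" using W'(1) WV by (rule order_trans)
    have fin: "finite W'" using WV' V(1) by (rule finite_subset)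
    have h2: "\<forall>U\<subseteq>W'. card U = s \<longrightarrow> has_indep U E t"
    proof (intro allI impI)
      fix U assume "U \<subseteq> W'" "card U = s"
      have "U \<subseteq> V" using \<open>U \<subseteq> W'\<close> WV' by (rule order_trans)
      then show "has_indep U E t" using hyp \<open>card U = s\<close> by simp
    qed
    have "has_indep W' E f" using fp[rule_format, OF conjI[OF fin conjI[OF W'(2) conjI[OF sg h2]]]] .
    then obtain S where "S \<subseteq> W'" "card S \<ge> f" "indep_set E S" unfolding has_indep_def by blast
    then show ?thesis using W'(1) by (meson order_trans)
  qed
  have ind: "\<exists>A c. A \<subseteq> V \<and> card A = min s (k*f) \<and> (\<forall>x\<in>A. c x < k) \<and>
     (\<forall>x\<in>A. \<forall>y\<in>A. x \<noteq> y \<longrightarrow> c x = c y \<longrightarrow> \<not> E x y)" for k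
  proof (induction k)
    case 0
    show ?case by (rule exI[of _ "{}"]) auto
  next
    case (Suc k)
    then obtain A c where A: "A \<subseteq> V" "card A = min s (k*f)" "\<forall>x\<in>A. c x < k"
      "\<forall>x\<in>A. \<forall>y\<in>A. x \<noteq> y \<longrightarrow> c x = c y \<longrightarrow> \<not> E x y" by blast
    show ?case
    proof (cases "s \<le> k*f")
      case True
      then have "min s (Suc k * f) = min s (k*f)" by simp
      then show ?thesis using A by (metis less_SucI)
    next
      case False
      then have cA: "card A = k*f" using A by simp
      have finA: "finite A" using A V finite_subset by blast
      have "card (V - A) = n - k*f" using A cA V by (simp add: card_Diff_subset finA)
      then have "card (V - A) \<ge> N" using False assms(1) unfolding N_def by simp
      then obtain S where S: "S \<subseteq> V - A" "card S \<ge> f" "indep_set E S"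
        using step[of "V - A"] by blast
      obtain S' where S': "S' \<subseteq> S" "card S' = min f (s - k*f)"
        using obtain_subset_with_card_n[of "min f (s - k*f)" S] S by force
      have finS': "finite S'" using S' S V finite_subset by (metis Diff_subset order_trans)
      define c' where "c' = (\<lambda>x. if x \<in> S' then k else c x)"
      have disj: "A \<inter> S' = {}" using S S' by blast
      have "card (A \<union> S') = k*f + min f (s - k*f)"
        using card_Un_disjoint[OF finA finS' disj] cA S' by simp
      also have "\<dots> = min s (Suc k * f)" using False by auto
      finally have c1: "card (A \<union> S') = min s (Suc k * f)" .
      have c2: "\<forall>x\<in>A \<union> S'. c' x < Suc k" using A unfolding c'_def by auto
      have c3: "\<forall>x\<in>A \<union> S'. \<forall>y\<in>A \<union> S'. x \<noteq> y \<longrightarrow> c' x = c' y \<longrightarrow> \<not> E x y"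
      proof (intro ballI impI)
        fix x y assume xy: "x \<in> A \<union> S'" "y \<in> A \<union> S'" "x \<noteq> y" "c' x = c' y"
        show "\<not> E x y"
        proof (cases "x \<in> S'")
          case True
          show ?thesis
          proof (cases "y \<in> S'")
            case True
            then show ?thesis using \<open>x \<in> S'\<close> S S' xy unfolding indep_set_def by blast
          next
            case False
            then have "y \<in> A" using xy by blast
            then show ?thesis using xy A(3) True False unfolding c'_def by force
          qed
        next
          case xn: False
          then have "x \<in> A" using xy by blast
          show ?thesis
          proof (cases "y \<in> S'")
            case True
            then show ?thesis using xy A(3) \<open>x \<in> A\<close> xn unfolding c'_def by force
          next
            case False
            then have "y \<in> A" using xy by blast
            then show ?thesis using xy A(4) \<open>x \<in> A\<close> xn False unfolding c'_def by auto
          qed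
        qed
      qed
      have "A \<union> S' \<subseteq> V" using A S S' by blast
      then show ?thesis using c1 c2 c3 by blast
    qed
  qed
  obtain A c where A: "A \<subseteq> V" "card A = min s ((t-1)*f)" "\<forall>x\<in>A. c x < t - 1"
      "\<forall>x\<in>A. \<forall>y\<in>A. x \<noteq> y \<longrightarrow> c x = c y \<longrightarrow> \<not> E x y"
    using ind[of "t-1"] by blast
  have "card A = s" using A(2) assms(4) unfolding f_def N_def by simp
  then have "has_clique A E t" using hyp A(1) by simp
  then obtain S where S: "S \<subseteq> A" "card S \<ge> t" "clique_set E S" unfolding has_clique_def by blast
  have finA: "finite A" using A(1) V(1) by (rule finite_subset)
  have finS: "finite S" using S(1) finA by (rule finite_subset)
  have "c ` S \<subseteq> {..<t-1}" using S A(3) by auto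
  then have "card (c ` S) \<le> card {..<t-1}" by (intro card_mono) auto
  then have cle: "card (c ` S) \<le> t - 1" by simp
  have "\<not> inj_on c S"
  proof
    assume "inj_on c S"
    then have "card (c ` S) = card S" by (rule card_image)
    then show False using cle S(2) assms(3) by simp
  qed
  then obtain x y where "x \<in> S" "y \<in> S" "x \<noteq> y" "c x = c y" unfolding inj_on_def by blast
  then show False using S A(4) unfolding clique_set_def by blast
qed

end
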